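(* Let $k\ge 2$ and $w=2^k-1$. Consider a line of $3w+2$ cells indexed $0,\dots,3w+1$ in which cells $0,\dots,w-1$ are empty, cells $w,\dots,2w-1$ are blocked, cells $2w,\dots,3w-1$ are empty, the frog is on cell $3w$, and cell $3w+1$ is empty (the line $E^wB^wE^wFE$). Let $\tilde Z$ be the sequence of jump lengths $$3w,\ \underbrace{1,\dots,1}_{w-1},\ w+1,\ \underbrace{1,\dots,1}_{w-1},\ 2.$$ Then the frog can perform $\tilde Z$ validly, and every valid execution of $\tilde Z$ visits every empty cell exactly once and ends with the frog on cell $3w+1$.
   Context: A frog on a line of cells performs a given sequence of positive jump lengths $J_1,J_2,\dots$; for each jump it chooses a direction, moving from position $p$ to $p+J_i$ or $p-J_i$. An execution is valid if every landing cell lies on the line, is not blocked, and has not been visited before (the starting cell counts as visited). *)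

theory Defs
  imports Main
begin

text \<open>An execution of the jump sequence J is recorded as the list ps of landing cells:
  ps!i is the cell reached after the (i+1)-th jump.\<close>

definition valid_exec :: "int set \<Rightarrow> int set \<Rightarrow> int \<Rightarrow> nat list \<Rightarrow> int list \<Rightarrow> bool" where
  "valid_exec line blocked s J ps \<longleftrightarrow>
     length ps = length J \<and>
     (\<forall>i < length J.
        ((s # ps) ! (Suc i) = (s # ps) ! i + int (J ! i) \<or>
         (s # ps) ! (Suc i) = (s # ps) ! i - int (J ! i)) \<and>
        ps ! i \<in> line \<and> ps ! i \<notin> blocked) \<and>
     distinct (s # ps)"

definition line_cells :: "nat \<Rightarrow> int set" where
  "line_cells w = {0 .. 3 * int w + 1}"

definition blocked_cells :: "nat \<Rightarrow> int set" where
  "blocked_cells w = {int w .. 2 * int w - 1}"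

definition empty_cells :: "nat \<Rightarrow> int set" where
  "empty_cells w = {0 .. int w - 1} \<union> {2 * int w .. 3 * int w - 1} \<union> {3 * int w + 1}"

definition frog_start :: "nat \<Rightarrow> int" where
  "frog_start w = 3 * int w"

definition Ztilde :: "nat \<Rightarrow> nat list" where
  "Ztilde w = [3 * w] @ replicate (w - 1) 1 @ [w + 1] @ replicate (w - 1) 1 @ [2]"

end

theory Submission
  imports Defs
begin

lemma Z_len: "w \<ge> 1 \<Longrightarrow> length (Ztilde w) = 2*w+1"
  by (simp add: Ztilde_def)

lemma Z_nth:
  assumes "w \<ge> 1" "i < 2*w+1"
  shows "Ztilde w ! i = (if i = 0 then 3*w else if i < w then 1 else if i = w then w+1
                         else if i < 2*w then 1 else 2)"
  using assms by (auto simp: Ztilde_def nth_append nth_Cons')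

definition ff :: "nat \<Rightarrow> nat \<Rightarrow> int" where
  "ff w i = (if i < w then int i else if i < 2*w then int w + int i else 3*int w + 1)"

lemma ps_unique:
  assumes w3: "w \<ge> 3" and v: "valid_exec (line_cells w) (blocked_cells w) (frog_start w) (Ztilde w) ps"
  shows "i < 2*w+1 \<Longrightarrow> ps ! i = ff w i"
proof (induction i rule: less_induct)
  case (less i)
  have len: "length ps = 2*w+1" using v w3 by (simp add: valid_exec_def Z_len)
  have st: "(ps ! i = (frog_start w # ps) ! i + int (Ztilde w ! i) \<or>
            ps ! i = (frog_start w # ps) ! i - int (Ztilde w ! i)) \<and>
           ps ! i \<in> line_cells w \<and> ps ! i \<notin> blocked_cells w"
    using v less.prems w3 by (auto simp: valid_exec_def Z_len)
  have dist: "distinct ps" and ns: "frog_start w \<notin> set ps" using v by (auto simp: valid_exec_def)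
  have dj: "\<And>j. j < i \<Longrightarrow> ps ! i \<noteq> ps ! j"
    using dist len less.prems by (simp add: nth_eq_iff_index_eq)
  have J: "Ztilde w ! i = (if i = 0 then 3*w else if i < w then 1 else if i = w then w+1
                         else if i < 2*w then 1 else 2)" using Z_nth w3 less.prems by simp
  show ?case
  proof (cases "i = 0")
    case True
    then show ?thesis using st J w3 by (auto simp: frog_start_def line_cells_def ff_def)
  next
    case False
    then have prev: "(frog_start w # ps) ! i = ff w (i - 1)"
      using less.IH[of "i-1"] less.prems by (cases i) auto
    consider "i = 1" | "1 < i" "i < w" | "i = w" | "i = w + 1" | "w+1 < i" "i < 2*w" | "i = 2*w"
      using False less.prems by linarith
    then show ?thesis
    proof cases
      case 1
      have a: "ff w (i-1) = 0" "ff w i = 1" using 1 w3 by (auto simp: ff_def)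
      show ?thesis using st J prev 1 a w3 by (auto simp: line_cells_def)
    next
      case 2
      have a: "ff w (i-1) = int i - 1" "ff w (i-2) = int i - 2" "ff w i = int i"
        using 2 by (auto simp: ff_def of_nat_diff)
      have "ps ! (i-2) = ff w (i-2)" using less.IH[of "i-2"] less.prems 2 by simp
      moreover have "ps ! i \<noteq> ps ! (i-2)" using dj 2 by simp
      ultimately show ?thesis using st J prev 2 a w3 by auto
    next
      case 3
      have a: "ff w (i-1) = int w - 1" "ff w i = 2 * int w" using 3 w3 by (auto simp: ff_def of_nat_diff)
      show ?thesis using st J prev 3 a w3 by (auto simp: line_cells_def)
    next
      case 4
      have a: "ff w (i-1) = 2 * int w" "ff w i = 2 * int w + 1" using 4 w3 by (auto simp: ff_def)
      show ?thesis using st J prev 4 a w3 by (auto simp: blocked_cells_def)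
    next
      case 5
      have a: "ff w (i-1) = int w + int i - 1" "ff w (i-2) = int w + int i - 2" "ff w i = int w + int i"
        using 5 by (auto simp: ff_def of_nat_diff)
      have "ps ! (i-2) = ff w (i-2)" using less.IH[of "i-2"] less.prems 5 by simp
      moreover have "ps ! i \<noteq> ps ! (i-2)" using dj 5 by simp
      ultimately show ?thesis using st J prev 5 a w3 by auto
    next
      case 6
      have a: "ff w (i-1) = 3 * int w - 1" "ff w (i-3) = 3 * int w - 3" "ff w i = 3 * int w + 1"
        using 6 w3 by (auto simp: ff_def of_nat_diff)
      have "ps ! (i-3) = ff w (i-3)" using less.IH[of "i-3"] less.prems 6 w3 by simp
      moreover have "ps ! i \<noteq> ps ! (i-3)" using dj 6 w3 by simp
      ultimately show ?thesis using st J prev 6 a w3 by auto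
    qed
  qed
qed

lemma ff_inj: "inj_on (ff w) {0..<2*w+1}"
  unfolding inj_on_def ff_def by auto

lemma ps_eq:
  assumes "w \<ge> 3" "valid_exec (line_cells w) (blocked_cells w) (frog_start w) (Ztilde w) ps"
  shows "ps = map (ff w) [0..<2*w+1]"
proof -
  have "length ps = 2*w+1" using assms by (simp add: valid_exec_def Z_len)
  then show ?thesis using ps_unique[OF assms] by (intro nth_equalityI) (simp_all add: nth_map_upt del: upt_Suc)
qed

lemma exists_valid:
  assumes w3: "w \<ge> 3"
  shows "valid_exec (line_cells w) (blocked_cells w) (frog_start w) (Ztilde w) (map (ff w) [0..<2*w+1])"
proof -
  let ?ps = "map (ff w) [0..<2*w+1]"
  have d: "distinct (frog_start w # ?ps)"
  proof -
    have "frog_start w \<notin> set ?ps" by (auto simp: frog_start_def ff_def)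
    moreover have "distinct ?ps" using ff_inj[of w] by (simp add: distinct_map del: upt_Suc)
    ultimately show ?thesis by simp
  qed
  have s: "\<forall>i < 2*w+1.
        ((frog_start w # ?ps) ! (Suc i) = (frog_start w # ?ps) ! i + int (Ztilde w ! i) \<or>
         (frog_start w # ?ps) ! (Suc i) = (frog_start w # ?ps) ! i - int (Ztilde w ! i)) \<and>
        ?ps ! i \<in> line_cells w \<and> ?ps ! i \<notin> blocked_cells w"
  proof (intro allI impI)
    fix i assume i: "i < 2*w+1"
    have J: "Ztilde w ! i = (if i = 0 then 3*w else if i < w then 1 else if i = w then w+1
                         else if i < 2*w then 1 else 2)" using Z_nth w3 i by simp
    have p: "(frog_start w # ?ps) ! i = (if i = 0 then 3 * int w else ff w (i-1))"
      using i by (cases i) (auto simp: frog_start_def nth_map_upt simp del: upt_Suc)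
    show "((frog_start w # ?ps) ! (Suc i) = (frog_start w # ?ps) ! i + int (Ztilde w ! i) \<or>
         (frog_start w # ?ps) ! (Suc i) = (frog_start w # ?ps) ! i - int (Ztilde w ! i)) \<and>
        ?ps ! i \<in> line_cells w \<and> ?ps ! i \<notin> blocked_cells w"
    proof -
      have c: "?ps ! i = ff w i" using i by (simp add: nth_map_upt del: upt_Suc)
      have q: "(frog_start w # ?ps) ! (Suc i) = ff w i" using c by simp
      consider "i = 0" | "0 < i" "i < w" | "i = w" | "w < i" "i < 2*w" | "i = 2*w"
        using i by linarith
      then show ?thesis
      proof cases
        case 1
        have "ff w i = 0" using 1 w3 by (simp add: ff_def)
        then show ?thesis using c q p J 1 w3 by (simp add: line_cells_def blocked_cells_def)
      next
        case 2
        have "ff w i = int i" "ff w (i-1) = int i - 1" using 2 by (auto simp: ff_def of_nat_diff)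
        then show ?thesis using c q p J 2 w3 by (simp add: line_cells_def blocked_cells_def)
      next
        case 3
        have "ff w i = 2 * int w" "ff w (i-1) = int w - 1" using 3 w3 by (auto simp: ff_def of_nat_diff)
        then show ?thesis using c q p J 3 w3 by (simp add: line_cells_def blocked_cells_def)
      next
        case 4
        have "ff w i = int w + int i" "ff w (i-1) = int w + int i - 1" using 4 by (auto simp: ff_def of_nat_diff)
        then show ?thesis using c q p J 4 w3 by (simp add: line_cells_def blocked_cells_def)
      next
        case 5
        have "ff w i = 3 * int w + 1" "ff w (i-1) = 3 * int w - 1" using 5 w3 by (auto simp: ff_def of_nat_diff)
        then show ?thesis using c q p J 5 w3 by (simp add: line_cells_def blocked_cells_def)
      qed
    qed
  qed
  show ?thesis unfolding valid_exec_def using d s w3 by (simp add: Z_len)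
qed

lemma in_img: "ff w i = c \<Longrightarrow> i < 2*w+1 \<Longrightarrow> c \<in> ff w ` {0..<2*w+1}"
  by auto

theorem mainTheorem6:
  fixes k w :: nat
  assumes "k \<ge> 2" and "w = 2 ^ k - 1"
  shows "(\<exists>ps. valid_exec (line_cells w) (blocked_cells w) (frog_start w) (Ztilde w) ps) \<and>
         (\<forall>ps. valid_exec (line_cells w) (blocked_cells w) (frog_start w) (Ztilde w) ps \<longrightarrow>
            (\<forall>c \<in> empty_cells w. length (filter (\<lambda>p. p = c) ps) = 1) \<and>
            last ps = 3 * int w + 1)"
proof -
  have "(2::nat)^2 \<le> 2^k" using assms(1) by (rule power_increasing) simp
  then have w3: "w \<ge> 3" using assms(2) by simp
  show ?thesis
  proof (intro conjI allI impI ballI)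
    show "\<exists>ps. valid_exec (line_cells w) (blocked_cells w) (frog_start w) (Ztilde w) ps"
      using exists_valid[OF w3] by blast
  next
    fix ps assume v: "valid_exec (line_cells w) (blocked_cells w) (frog_start w) (Ztilde w) ps"
    have e: "ps = map (ff w) [0..<2*w+1]" by (rule ps_eq[OF w3 v])
    show "last ps = 3 * int w + 1" unfolding e by (simp add: ff_def)
  next
    fix ps c assume v: "valid_exec (line_cells w) (blocked_cells w) (frog_start w) (Ztilde w) ps"
      and c: "c \<in> empty_cells w"
    have e: "ps = map (ff w) [0..<2*w+1]" by (rule ps_eq[OF w3 v])
    have dd: "distinct ps" using v by (simp add: valid_exec_def)
    have se: "set ps = ff w ` {0..<2*w+1}" unfolding e by (simp del: upt_Suc)
    have "c \<in> set ps"
    proof -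
      consider "0 \<le> c" "c \<le> int w - 1" | "2*int w \<le> c" "c \<le> 3*int w - 1" | "c = 3*int w + 1"
        using c by (auto simp: empty_cells_def)
      then show ?thesis
      proof cases
        case 1
        then have "ff w (nat c) = c" "nat c < 2*w+1" by (auto simp: ff_def)
        then show ?thesis unfolding se by (rule in_img)
      next
        case 2
        then have "ff w (nat c - w) = c" "nat c - w < 2*w+1" by (auto simp: ff_def)
        then show ?thesis unfolding se by (rule in_img)
      next
        case 3
        then have "ff w (2*w) = c" "2*w < 2*w+1" by (auto simp: ff_def)
        then show ?thesis unfolding se by (rule in_img)
      qed
    qed
    then have "{x. x = c} \<inter> set ps = {c}" by auto
    then show "length (filter (\<lambda>p. p = c) ps) = 1"
      using distinct_length_filter[OF dd, of "\<lambda>p. p = c"] by simp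
  qed
qed

end
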